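(* Let $A$ be an infinite alphabet and let $M\in\mathbb{N}$ with $M\geq 1$. Let $\tilde f:A^{M+2}\to\{0,1\}$ be a map satisfying: (1) there exist $x_1,\dots,x_M\in A$ such that there are infinitely many $x_{M+1}\in A$ for which $$1=\tilde f(x_1,x_2,\dots,x_M,x_{M+1},x_1)=\tilde f(x_2,x_3,\dots,x_{M+1},x_1,x_2)=\cdots=\tilde f(x_M,x_{M+1},x_1,\dots,x_M)=\tilde f(x_{M+1},x_1,x_2,\dots,x_{M+1}),$$ i.e. $\tilde f$ takes the value $1$ on each of the $M+1$ words of length $M+2$ obtained by reading $M+2$ consecutive letters of the periodic sequence $x_1x_2\cdots x_Mx_{M+1}x_1x_2\cdots$ starting at positions $1,2,\dots,M+1$; (2) for each $(x_1,\dots,x_{M+1})\in A^{M+1}$ there are only finitely many $x_{M+2}\in A$ with $\tilde f(x_1,\dots,x_{M+1},x_{M+2})=1$. Let $f$ be the $(M+1)$-step shift map induced by $\tilde f$ and $X_f$ the associated $(M+1)$-step shift space. Then $X_f$ is not conjugate to any $M$-step shift space (over any alphabet $B$).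
   Context: Following Ott–Tomforde–Willis. For an alphabet $A$, let $\emptyset$ denote the empty sequence, $\Sigma_A^{fin}=\{\emptyset\}\cup\bigcup_{k\ge1}A^k$, $\Sigma_A^{inf}=A^{\mathbb N}$. The full shift is $\Sigma_A=\Sigma_A^{inf}$ if $A$ is finite and $\Sigma_A=\Sigma_A^{inf}\cup\Sigma_A^{fin}$ if $A$ is infinite. The length $l(x)$ is $k$ if $x\in A^k$ (with $l(\emptyset)=0$) and $\infty$ if $x\in\Sigma_A^{inf}$. The topology on $\Sigma_A$ has as basis the generalized cylinders $Z(x,F)=\{y\in\Sigma_A: y_i=x_i\ (1\le i\le k),\ y_{k+1}\notin F\}$ for $x=(x_1,\dots,x_k)\neq\emptyset$ and finite $F\subseteq A$, and $Z(\emptyset,F)=\{y\in\Sigma_A: y_1\notin F\}$ (the condition $y_{k+1}\notin F$ is vacuous when $F=\emptyset$; when $F\ne\emptyset$ it requires $l(y)\ge k+1$ or... precisely, $y$ of length $k$ belongs to $Z(x,F)$ as $y_{k+1}$ does not exist). The shift map $\sigma$ deletes the first letter (and sends $\emptyset$ and length-one words to $\emptyset$). A subblock of $x\in\Sigma_A$ is $u\in\Sigma_A^{fin}$ with $x=vuz$ for some $v\in\Sigma_A^{fin}$, $z\in\Sigma_A$. For $f:\bigcup_{k\ge1}A^k\to\{0,1\}$, let $X_f^{inf}=\{x\in\Sigma_A^{inf}: f(u)=1$ for every nonempty subblock $u$ of $x\}$, $X_f^{fin}=\{x\in\Sigma_A^{fin}:$ there are infinitely many $a\in A$ for which some $y\in\Sigma_A^{inf}$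 has $xay\in X_f^{inf}\}$, and $X_f=X_f^{inf}\cup X_f^{fin}$. Given $N\ge0$ and $\tilde f:A^{N+1}\to\{0,1\}$, the $N$-step shift map induced by $\tilde f$ is $f(x)=1$ if $|x|\le N$ and $f(x)=\prod_{i=1}^{|x|-N}\tilde f(x_i,\dots,x_{N+i})$ if $|x|\ge N+1$. A subset of $\Sigma_A$ is an $N$-step shift space iff it equals $X_f$ for some $N$-step shift map $f$ induced by some $\tilde f:A^{N+1}\to\{0,1\}$ (equivalently, it is the shift space defined by a set of forbidden words all of length $N+1$). A conjugacy between shift spaces $\Lambda\subseteq\Sigma_A$ and $Y\subseteq\Sigma_B$ is a bijection $\phi:\Lambda\to Y$ that is continuous, commutes with the shift maps, and satisfies $l(\phi(x))=l(x)$ for all $x\in\Lambda$. *)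

theory Defs
  imports "HOL-Analysis.Analysis" "HOL-Library.Extended_Nat"
begin

text \<open>Points of the full shift: finite words (including the empty word) or
  one-sided infinite sequences (indexed from 0) over the alphabet, which is
  the whole type 'a.\<close>
datatype 'a sq = Fin "'a list" | Inf "nat \<Rightarrow> 'a"

definition full_shift :: "'a sq set" where
  "full_shift = (if finite (UNIV :: 'a set) then range Inf else UNIV)"

fun sq_len :: "'a sq \<Rightarrow> enat" where
  "sq_len (Fin xs) = enat (length xs)"
| "sq_len (Inf x) = \<infinity>"

fun letter :: "'a sq \<Rightarrow> nat \<Rightarrow> 'a option" where
  "letter (Fin xs) i = (if i < length xs then Some (xs ! i) else None)"
| "letter (Inf x) i = Some (x i)"

fun shift :: "'a sq \<Rightarrow> 'a sq" where
  "shift (Fin xs) = Fin (tl xs)"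
| "shift (Inf x) = Inf (\<lambda>n. x (Suc n))"

definition cyl :: "'a list \<Rightarrow> 'a set \<Rightarrow> 'a sq set" where
  "cyl x F = {y \<in> full_shift.
      (\<forall>i < length x. letter y i = Some (x ! i)) \<and>
      (\<forall>a. letter y (length x) = Some a \<longrightarrow> a \<notin> F)}"

definition shift_topology :: "'a sq topology" where
  "shift_topology = topology_generated_by {cyl x F | x F. finite F}"

definition Xinf :: "('a list \<Rightarrow> bool) \<Rightarrow> (nat \<Rightarrow> 'a) set" where
  "Xinf f = {x. \<forall>i n. n \<ge> 1 \<longrightarrow> f (map (\<lambda>j. x (i + j)) [0..<n])}"

definition prep :: "'a list \<Rightarrow> (nat \<Rightarrow> 'a) \<Rightarrow> nat \<Rightarrow> 'a" where
  "prep w y n = (if n < length w then w ! n else y (n - length w))"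

definition Xfin :: "('a list \<Rightarrow> bool) \<Rightarrow> 'a list set" where
  "Xfin f = {w. infinite {a. \<exists>y. prep (w @ [a]) y \<in> Xinf f}}"

definition Xf :: "('a list \<Rightarrow> bool) \<Rightarrow> 'a sq set" where
  "Xf f = Inf ` Xinf f \<union> Fin ` Xfin f"

definition induced :: "nat \<Rightarrow> ('a list \<Rightarrow> bool) \<Rightarrow> 'a list \<Rightarrow> bool" where
  "induced N ft x = (length x \<le> N \<or>
      (\<forall>i < length x - N. ft (map (\<lambda>j. x ! (i + j)) [0..<N+1])))"

definition N_step_space :: "nat \<Rightarrow> 'a sq set \<Rightarrow> bool" where
  "N_step_space N Y \<longleftrightarrow> (\<exists>ft :: 'a list \<Rightarrow> bool. Y = Xf (induced N ft))"

definition conjugacy :: "('a sq \<Rightarrow> 'b sq) \<Rightarrow> 'a sq set \<Rightarrow> 'b sq set \<Rightarrow> bool" where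
  "conjugacy \<phi> L Y \<longleftrightarrow>
     bij_betw \<phi> L Y \<and>
     continuous_map (subtopology shift_topology L) (subtopology shift_topology Y) \<phi> \<and>
     (\<forall>x \<in> L. \<phi> (shift x) = shift (\<phi> x)) \<and>
     (\<forall>x \<in> L. sq_len (\<phi> x) = sq_len x)"

end

theory Submission
  imports Defs
begin


lemma Xinf_induced:
  "Xinf (induced N g) = {x. \<forall>i. g (map (\<lambda>j. x (i+j)) [0..<N+1])}"
proof (intro set_eqI iffI)
  fix x assume "x \<in> Xinf (induced N g)"
  then have h: "\<And>i n. n \<ge> 1 \<Longrightarrow> induced N g (map (\<lambda>j. x (i + j)) [0..<n])"
    by (simp add: Xinf_def)
  show "x \<in> {x. \<forall>i. g (map (\<lambda>j. x (i+j)) [0..<N+1])}"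
  proof (intro CollectI allI)
    fix i
    have "induced N g (map (\<lambda>j. x (i + j)) [0..<N+1])" using h[of "N+1" i] by simp
    then have G: "g (map (\<lambda>j. (map (\<lambda>j. x (i + j)) [0..<N+1]) ! (0 + j)) [0..<N+1])"
      unfolding induced_def by auto
    have E: "map (\<lambda>j. (map (\<lambda>j. x (i + j)) [0..<N+1]) ! (0 + j)) [0..<N+1]
       = map (\<lambda>j. x (i + j)) [0..<N+1]" by (intro map_cong) (auto simp del: upt_Suc)
    show "g (map (\<lambda>j. x (i+j)) [0..<N+1])" using G unfolding E .
  qed
next
  fix x assume "x \<in> {x. \<forall>i. g (map (\<lambda>j. x (i+j)) [0..<N+1])}"
  then have h: "\<And>i. g (map (\<lambda>j. x (i+j)) [0..<N+1])" by simp
  show "x \<in> Xinf (induced N g)"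
    unfolding Xinf_def induced_def
  proof (intro CollectI allI impI)
    fix i n :: nat
    assume "n \<ge> 1"
    show "length (map (\<lambda>j. x (i + j)) [0..<n]) \<le> N \<or>
      (\<forall>k<length (map (\<lambda>j. x (i + j)) [0..<n]) - N.
        g (map (\<lambda>j. map (\<lambda>j. x (i + j)) [0..<n] ! (k + j)) [0..<N + 1]))"
    proof (rule disjI2, intro allI impI)
      fix k assume k: "k < length (map (\<lambda>j. x (i + j)) [0..<n]) - N"
      have E: "map (\<lambda>j. map (\<lambda>j. x (i + j)) [0..<n] ! (k + j)) [0..<N + 1]
          = map (\<lambda>j. x ((i+k) + j)) [0..<N + 1]"
        using k by (intro map_cong) (auto simp: add.assoc simp del: upt_Suc)
      show "g (map (\<lambda>j. map (\<lambda>j. x (i + j)) [0..<n] ! (k + j)) [0..<N + 1])"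
        unfolding E by (rule h)
    qed
  qed
qed

lemma Xinf_shiftk: "x \<in> Xinf f \<Longrightarrow> (\<lambda>n. x (k+n)) \<in> Xinf f"
  unfolding Xinf_def
proof (intro CollectI allI impI)
  fix i n :: nat assume x: "x \<in> {x. \<forall>i n. 1 \<le> n \<longrightarrow> f (map (\<lambda>j. x (i + j)) [0..<n])}" and n: "1 \<le> n"
  then have "f (map (\<lambda>j. x ((k+i) + j)) [0..<n])" by blast
  then show "f (map (\<lambda>j. x (k + (i + j))) [0..<n])" by (simp add: add.assoc)
qed

lemma cyl_open_lemma:
  fixes p :: "'c \<Rightarrow> nat \<Rightarrow> 'a"
  assumes gen: "generate_topology_on {cyl x F | x F. finite F} U"
    and pw: "\<And>c i. c \<in> S \<Longrightarrow> i < length w \<Longrightarrow> p c i = w ! i"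
    and pfin: "\<And>F. finite F \<Longrightarrow> finite {c\<in>S. p c (length w) \<in> F}"
    and pfs: "\<And>c. c \<in> S \<Longrightarrow> Inf (p c) \<in> full_shift"
  shows "Fin w \<in> U \<Longrightarrow> finite {c\<in>S. Inf (p c) \<notin> U}"
  using gen
proof (induction rule: generate_topology_on.induct)
  case Empty
  then show ?case by simp
next
  case (Int a b)
  have "{c\<in>S. Inf (p c) \<notin> a \<inter> b} \<subseteq> {c\<in>S. Inf (p c) \<notin> a} \<union> {c\<in>S. Inf (p c) \<notin> b}" by auto
  then show ?case using Int by (meson finite_UnI finite_subset IntD1 IntD2)
next
  case (UN K)
  then obtain k where k: "k \<in> K" "Fin w \<in> k" by auto
  have "{c\<in>S. Inf (p c) \<notin> \<Union>K} \<subseteq> {c\<in>S. Inf (p c) \<notin> k}" using k by auto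
  then show ?case using UN k by (meson finite_subset)
next
  case (Basis s)
  then obtain u F where s: "s = cyl u F" "finite F" by auto
  have wu: "\<forall>i<length u. letter (Fin w) i = Some (u ! i)"
    and wF: "\<forall>a. letter (Fin w) (length u) = Some a \<longrightarrow> a \<notin> F"
    using Basis.prems s by (auto simp: cyl_def)
  have lu: "length u \<le> length w"
  proof (rule ccontr)
    assume "\<not> ?thesis"
    then have "letter (Fin w) (length w) = Some (u ! length w)" using wu by (meson not_le)
    then show False by simp
  qed
  have uw: "\<And>i. i < length u \<Longrightarrow> u ! i = w ! i" using wu lu
    by (metis letter.simps(1) option.inject order_less_le_trans)
  show ?case
  proof (cases "length u < length w")
    case True
    have "{c\<in>S. Inf (p c) \<notin> s} = {}"
    proof -
      { fix c assume c: "c \<in> S"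
        have "w ! length u \<notin> F" using wF True by simp
        then have "Inf (p c) \<in> s" using c True uw pw pfs s
          by (auto simp: cyl_def) }
      then show "{c\<in>S. Inf (p c) \<notin> s} = {}" by auto
    qed
    then show ?thesis by (rule ssubst) simp
  next
    case False
    then have lw: "length u = length w" using lu by simp
    have "{c\<in>S. Inf (p c) \<notin> s} \<subseteq> {c\<in>S. p c (length w) \<in> F}"
      using lw uw pw pfs s by (auto simp: cyl_def)
    then show ?thesis using pfin s by (meson finite_subset)
  qed
qed

lemma Xfin_long:
  assumes cond2: "\<forall>ys. length ys = M + 1 \<longrightarrow> finite {a. ft (ys @ [a])}"
    and w: "w \<in> Xfin (induced (M+1) ft)" and lw: "length w \<ge> M + 1"
  shows False
proof -
  define i where "i = length w - (M+1)"
  define ys where "ys = drop i w"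
  have lys: "length ys = M + 1" using lw by (simp add: ys_def i_def)
  have "{a. \<exists>y. prep (w @ [a]) y \<in> Xinf (induced (M+1) ft)} \<subseteq> {a. ft (ys @ [a])}"
  proof
    fix a assume "a \<in> {a. \<exists>y. prep (w @ [a]) y \<in> Xinf (induced (M+1) ft)}"
    then obtain y where "prep (w @ [a]) y \<in> Xinf (induced (M+1) ft)" by auto
    then have ft1: "ft (map (\<lambda>j. prep (w @ [a]) y (i+j)) [0..<M+1+1])"
      unfolding Xinf_induced by blast
    have eq: "map (\<lambda>j. prep (w @ [a]) y (i+j)) [0..<M+1+1] = ys @ [a]"
    proof (rule nth_equalityI)
      show "length (map (\<lambda>j. prep (w @ [a]) y (i+j)) [0..<M+1+1]) = length (ys @ [a])"
        using lys by simp
      fix j assume "j < length (map (\<lambda>j. prep (w @ [a]) y (i+j)) [0..<M+1+1])"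
      then have j: "j < M + 2" by simp
      show "map (\<lambda>j. prep (w @ [a]) y (i+j)) [0..<M+1+1] ! j = (ys @ [a]) ! j"
        using j lw lys unfolding prep_def ys_def i_def
        by (auto simp: nth_append less_Suc_eq)
    qed
    show "a \<in> {a. ft (ys @ [a])}" using ft1 by (simp only: eq mem_Collect_eq)
  qed
  moreover have "infinite {a. \<exists>y. prep (w @ [a]) y \<in> Xinf (induced (M+1) ft)}"
    using w by (simp add: Xfin_def)
  ultimately show False using cond2 lys by (meson finite_subset)
qed



theorem proposition1:
  fixes ft :: "'a list \<Rightarrow> bool" and M :: nat
  assumes infA: "infinite (UNIV :: 'a set)"
    and M1: "M \<ge> 1"
    and cond1: "\<exists>xs. length xs = M \<and>
       infinite {a. \<forall>j \<le> M.
          ft (map (\<lambda>i. (xs @ [a]) ! ((j + i) mod (M + 1))) [0..<M + 2])}"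
    and cond2: "\<forall>ys. length ys = M + 1 \<longrightarrow> finite {a. ft (ys @ [a])}"
  shows "\<not> (\<exists>(Y :: 'b sq set) \<phi>. N_step_space M Y \<and>
                conjugacy \<phi> (Xf (induced (M + 1) ft)) Y)"
proof
  assume "\<exists>(Y :: 'b sq set) \<phi>. N_step_space M Y \<and> conjugacy \<phi> (Xf (induced (M + 1) ft)) Y"
  then obtain Y :: "'b sq set" and \<phi> gt where Ydef: "Y = Xf (induced M gt)"
      and conj: "conjugacy \<phi> (Xf (induced (M + 1) ft)) Y"
    unfolding N_step_space_def by blast
  define X where "X = Xf (induced (M + 1) ft)"
  have bij: "bij_betw \<phi> X Y"
    and cont: "continuous_map (subtopology shift_topology X) (subtopology shift_topology Y) \<phi>"
    and comm: "\<And>x. x \<in> X \<Longrightarrow> \<phi> (shift x) = shift (\<phi> x)"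
    and len: "\<And>x. x \<in> X \<Longrightarrow> sq_len (\<phi> x) = sq_len x"
    using conj unfolding conjugacy_def X_def by auto
  obtain xs where lxs: "length xs = M" and infS: "infinite {a. \<forall>j \<le> M.
          ft (map (\<lambda>i. (xs @ [a]) ! ((j + i) mod (M + 1))) [0..<M + 2])}"
    using cond1 by blast
  define S where "S = {a. \<forall>j \<le> M.
          ft (map (\<lambda>i. (xs @ [a]) ! ((j + i) mod (M + 1))) [0..<M + 2])}"
  define p where "p a n = (xs @ [a]) ! (n mod (M+1))" for a n
  have fsA: "full_shift = (UNIV :: 'a sq set)" using infA by (simp add: full_shift_def)
  have pX: "p a \<in> Xinf (induced (M+1) ft)" if "a \<in> S" for a
  proof -
    have "ft (map (\<lambda>j. p a (i+j)) [0..<M+1+1])" for i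
    proof -
      have "i mod (M+1) \<le> M" by (simp add: less_Suc_eq_le)
      then have G: "ft (map (\<lambda>k. (xs @ [a]) ! ((i mod (M+1) + k) mod (M + 1))) [0..<M + 2])"
        using that by (simp add: S_def)
      have E: "map (\<lambda>j. p a (i+j)) [0..<M+1+1]
         = map (\<lambda>k. (xs @ [a]) ! ((i mod (M+1) + k) mod (M + 1))) [0..<M + 2]"
        by (intro map_cong) (auto simp: p_def mod_add_left_eq simp del: upt_Suc)
      show ?thesis unfolding E by (rule G)
    qed
    then show ?thesis unfolding Xinf_induced by simp
  qed
  have pshift: "(\<lambda>n. p a (M+1+n)) = p a" for a
  proof
    fix n
    have "(M+1+n) mod (M+1) = n mod (M+1)" by (metis mod_add_self1)
    then show "p a (M+1+n) = p a n" unfolding p_def by metis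
  qed
  have xsX: "xs \<in> Xfin (induced (M+1) ft)"
  proof -
    have "S \<subseteq> {a. \<exists>y. prep (xs @ [a]) y \<in> Xinf (induced (M+1) ft)}"
    proof
      fix a assume a: "a \<in> S"
      have "prep (xs @ [a]) (\<lambda>n. p a (M+1+n)) = p a"
      proof
        fix n
        show "prep (xs @ [a]) (\<lambda>n. p a (M+1+n)) n = p a n"
        proof (cases "n < M+1")
          case True then show ?thesis using lxs by (simp add: prep_def p_def)
        next
          case False
          then have "M+1+(n - (M+1)) = n" by simp
          then show ?thesis using False lxs by (simp add: prep_def p_def)
        qed
      qed
      then show "a \<in> {a. \<exists>y. prep (xs @ [a]) y \<in> Xinf (induced (M+1) ft)}"
        using pX[OF a] by (metis (no_types, lifting) mem_Collect_eq)
    qed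
    then show ?thesis using infS unfolding S_def Xfin_def mem_Collect_eq by (meson finite_subset)
  qed
  then have FxsX: "Fin xs \<in> X" by (simp add: X_def Xf_def)
  have pXX: "Inf (\<lambda>n. p a (k+n)) \<in> X" if "a \<in> S" for a k
    using Xinf_shiftk[OF pX[OF that]] by (simp add: X_def Xf_def)
  obtain v where phixs: "\<phi> (Fin xs) = Fin v" and lv: "length v = M"
  proof -
    have "sq_len (\<phi> (Fin xs)) = enat M" using len[OF FxsX] lxs by simp
    then show ?thesis using that by (cases "\<phi> (Fin xs)") auto
  qed
  have "Fin v \<in> Y" using bij FxsX phixs by (metis bij_betwE)
  then have vY: "v \<in> Xfin (induced M gt)" unfolding Ydef Xf_def by auto
  have infB: "infinite (UNIV :: 'b set)"
    using vY unfolding Xfin_def mem_Collect_eq by (meson finite_subset subset_UNIV)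
  have fsB: "full_shift = (UNIV :: 'b sq set)" using infB by (simp add: full_shift_def)
  have "\<forall>a\<in>S. \<exists>r. \<phi> (Inf (p a)) = Inf r \<and> r \<in> Xinf (induced M gt)"
  proof
    fix a assume a: "a \<in> S"
    have pa: "Inf (p a) \<in> X" using pXX[OF a, of 0] by simp
    have "\<phi> (Inf (p a)) \<in> Y" using bij pa by (metis bij_betwE)
    moreover have "sq_len (\<phi> (Inf (p a))) = \<infinity>" using len[OF pa] by simp
    ultimately show "\<exists>r. \<phi> (Inf (p a)) = Inf r \<and> r \<in> Xinf (induced M gt)"
      unfolding Ydef Xf_def by auto
  qed
  then obtain q where q: "\<And>a. a \<in> S \<Longrightarrow> \<phi> (Inf (p a)) = Inf (q a)"
    and qY: "\<And>a. a \<in> S \<Longrightarrow> q a \<in> Xinf (induced M gt)"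
    by metis
  have qshift: "\<phi> (Inf (\<lambda>n. p a (k+n))) = Inf (\<lambda>n. q a (k+n))" if a: "a \<in> S" for a k
  proof (induction k)
    case 0 then show ?case using q[OF a] by simp
  next
    case (Suc k)
    have "\<phi> (shift (Inf (\<lambda>n. p a (k+n)))) = shift (\<phi> (Inf (\<lambda>n. p a (k+n))))"
      using comm[OF pXX[OF a]] .
    then show ?case using Suc by simp
  qed
  have qper: "q a (M+1+n) = q a n" if a: "a \<in> S" for a n
  proof -
    have "Inf (\<lambda>n. q a (M+1+n)) = Inf (q a)" using qshift[OF a, of "M+1"] q[OF a] pshift[of a]
      by simp
    then show ?thesis by (metis sq.inject(2))
  qed
  have contq: "finite {a\<in>S. \<not> (\<forall>i<M. q a i = v ! i) \<or> q a M \<in> F}" if F: "finite F" for F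
  proof -
    have oc: "openin shift_topology (cyl v F)"
      unfolding shift_topology_def openin_topology_generated_by_iff
      using F by (intro generate_topology_on.Basis) blast
    have oY: "openin (subtopology shift_topology Y) (cyl v F \<inter> Y)"
      using oc by (auto simp: openin_subtopology)
    have "openin (subtopology shift_topology X)
        {x \<in> topspace (subtopology shift_topology X). \<phi> x \<in> cyl v F \<inter> Y}"
      using cont oY unfolding continuous_map_def by blast
    then obtain U where U: "openin shift_topology U"
      and UE: "{x \<in> topspace (subtopology shift_topology X). \<phi> x \<in> cyl v F \<inter> Y} = U \<inter> X"
      by (auto simp: openin_subtopology)
    have ts: "topspace (shift_topology :: 'a sq topology) = UNIV"
    proof -
      have "openin shift_topology (cyl [] {} :: 'a sq set)"
        unfolding shift_topology_def openin_topology_generated_by_iff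
        by (intro generate_topology_on.Basis) blast
      moreover have "cyl [] {} = (UNIV :: 'a sq set)" by (simp add: cyl_def fsA)
      ultimately show ?thesis using openin_subset by fastforce
    qed
    have vc: "Fin v \<in> cyl v F" using fsB by (simp add: cyl_def)
    have "Fin xs \<in> U" using UE FxsX phixs vc \<open>Fin v \<in> Y\<close> ts by auto
    moreover have "generate_topology_on {cyl x F | x F. finite F} U"
      using U unfolding shift_topology_def openin_topology_generated_by_iff .
    ultimately have fU: "finite {c\<in>S. Inf (p c) \<notin> U}"
    proof (intro cyl_open_lemma[where w = xs and p = p and S = S])
      show "p c i = xs ! i" if "c \<in> S" "i < length xs" for c i
        using that lxs by (simp add: p_def nth_append)
      show "finite {c\<in>S. p c (length xs) \<in> G}" if "finite G" for G
      proof -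
        have "{c\<in>S. p c (length xs) \<in> G} \<subseteq> G" using lxs by (auto simp: p_def)
        then show ?thesis using that by (meson finite_subset)
      qed
      show "Inf (p c) \<in> full_shift" for c by (simp add: fsA)
    qed auto
    have "{a\<in>S. \<not> (\<forall>i<M. q a i = v ! i) \<or> q a M \<in> F} \<subseteq> {c\<in>S. Inf (p c) \<notin> U}"
    proof (rule subsetI, rule ccontr)
      fix a assume a1: "a \<in> {a\<in>S. \<not> (\<forall>i<M. q a i = v ! i) \<or> q a M \<in> F}"
        and a2: "a \<notin> {c\<in>S. Inf (p c) \<notin> U}"
      have aS: "a \<in> S" using a1 by simp
      have "Inf (p a) \<in> U \<inter> X" using a2 aS pXX[OF aS, of 0] by simp
      then have "\<phi> (Inf (p a)) \<in> cyl v F" using UE by blast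
      then have "Inf (q a) \<in> cyl v F" using q[OF aS] by simp
      then have "(\<forall>i<M. q a i = v ! i) \<and> q a M \<notin> F" using lv by (auto simp: cyl_def)
      moreover have "\<not> (\<forall>i<M. q a i = v ! i) \<or> q a M \<in> F" using a1 by simp
      ultimately show False by blast
    qed
    then show ?thesis using fU by (meson finite_subset)
  qed
  define S' where "S' = {a\<in>S. \<forall>i<M. q a i = v ! i}"
  have infS': "infinite S'"
  proof
    assume "finite S'"
    moreover have "S - S' \<subseteq> {a\<in>S. \<not> (\<forall>i<M. q a i = v ! i) \<or> q a M \<in> {}}"
      by (auto simp: S'_def)
    moreover have "S \<subseteq> S' \<union> (S - S')" by blast
    ultimately have "finite S" using contq[of "{}"]
      by (meson finite_UnI finite_subset finite.emptyI)
    then show False using infS S_def by simp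
  qed
  have infBS: "infinite ((\<lambda>a. q a M) ` S')"
  proof
    assume fin: "finite ((\<lambda>a. q a M) ` S')"
    have "S' \<subseteq> {a\<in>S. \<not> (\<forall>i<M. q a i = v ! i) \<or> q a M \<in> (\<lambda>a. q a M) ` S'}"
      by (auto simp: S'_def)
    then show False using contq[OF fin] infS' by (meson finite_subset)
  qed
  obtain a0 where a0: "a0 \<in> S'" using infS' by (metis finite.emptyI equals0I)
  have a0S: "a0 \<in> S" using a0 by (simp add: S'_def)
  define u where "u = map (q a0) [0..<2*M+1]"
  have uY: "u \<in> Xfin (induced M gt)"
  proof -
    have "(\<lambda>a. q a M) ` S' \<subseteq> {b. \<exists>y. prep (u @ [b]) y \<in> Xinf (induced M gt)}"
    proof
      fix b assume "b \<in> (\<lambda>a. q a M) ` S'"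
      then obtain a where a: "a \<in> S'" and b: "b = q a M" by auto
      have aS: "a \<in> S" using a by (simp add: S'_def)
      define r where "r = prep (u @ [b]) (\<lambda>n. q a (M+1+n))"
      have r1: "r n = q a0 n" if "n \<le> 2*M" for n
        using that by (simp add: r_def prep_def u_def nth_append)
      have r2: "r n = q a (n - (M+1))" if "n \<ge> M+1" for n
      proof (cases "n \<le> 2*M")
        case True
        have "r n = q a0 n" using r1 True by simp
        also have "\<dots> = q a0 (n - (M+1))" using qper[OF a0S, of "n - (M+1)"] that by simp
        also have "\<dots> = v ! (n - (M+1))" using a0 True M1 by (simp add: S'_def)
        also have "\<dots> = q a (n - (M+1))" using a True M1 by (simp add: S'_def)
        finally show ?thesis .
      next
        case False
        show ?thesis
        proof (cases "n = 2*M+1")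
          case True
          then show ?thesis using b by (simp add: r_def prep_def u_def nth_append)
        next
          case False
          then have "n \<ge> 2*M+2" using \<open>\<not> n \<le> 2*M\<close> by simp
          then have e: "M + 1 + (n - (2*M+2)) = n - (M+1)" by simp
          have "r n = q a (M + 1 + (n - (2*M+2)))" using \<open>n \<ge> 2*M+2\<close>
            by (simp add: r_def prep_def u_def)
          then show ?thesis by (simp only: e)
        qed
      qed
      have "r \<in> Xinf (induced M gt)"
        unfolding Xinf_induced
      proof (intro CollectI allI)
        fix i
        show "gt (map (\<lambda>j. r (i + j)) [0..<M + 1])"
        proof (cases "i \<ge> M+1")
          case True
          have E: "map (\<lambda>j. r (i + j)) [0..<M + 1] = map (\<lambda>j. q a ((i - (M+1)) + j)) [0..<M + 1]"
            using True r2 by (intro map_cong) (auto simp del: upt_Suc)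
          have "gt (map (\<lambda>j. q a ((i - (M+1)) + j)) [0..<M + 1])"
            using qY[OF aS] unfolding Xinf_induced by blast
          then show ?thesis unfolding E .
        next
          case False
          have E: "map (\<lambda>j. r (i + j)) [0..<M + 1] = map (\<lambda>j. q a0 (i + j)) [0..<M + 1]"
            using False r1 by (intro map_cong) (auto simp del: upt_Suc)
          have "gt (map (\<lambda>j. q a0 (i + j)) [0..<M + 1])"
            using qY[OF a0S] unfolding Xinf_induced by blast
          then show ?thesis unfolding E .
        qed
      qed
      then show "b \<in> {b. \<exists>y. prep (u @ [b]) y \<in> Xinf (induced M gt)}"
        unfolding r_def by auto
    qed
    then show ?thesis using infBS unfolding Xfin_def mem_Collect_eq by (meson finite_subset)
  qed
  then have "Fin u \<in> Y" by (simp add: Ydef Xf_def)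
  moreover have "\<phi> ` X = Y" using bij by (simp add: bij_betw_def)
  ultimately obtain x where x: "x \<in> X" "\<phi> x = Fin u" by (metis imageE)
  have "sq_len x = enat (2*M+1)" using len[OF x(1)] x(2) by (simp add: u_def)
  then obtain w' where w': "x = Fin w'" "length w' = 2*M+1" by (cases x) auto
  have "w' \<in> Xfin (induced (M+1) ft)" using x(1) w'(1) by (auto simp: X_def Xf_def)
  moreover have "M + 1 \<le> length w'" using w'(2) by simp
  ultimately show False using Xfin_long[OF cond2] by blast
qed

end
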